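(* Let $I\subset\mathbb{R}$ be an open interval and let $x_1,x_2,\varphi:I\to\mathbb{R}$ be smooth functions such that the curve $\gamma(u)=(x_1(u),x_2(u),\cos\varphi(u),\sin\varphi(u))$ in $\mathbb{E}^4$ is parametrized by arclength, i.e. $(x_1')^2+(x_2')^2+(\varphi')^2=1$, and such that $1-(\varphi'(u))^2\neq 0$ for all $u\in I$. Let $M$ be the surface with position vector $$X(u,v)=\big(x_1(u),\,x_2(u),\,\cos\varphi(u)\cos v-\sin\varphi(u)\sin v,\,\cos\varphi(u)\sin v+\sin\varphi(u)\cos v\big).$$ Then the mean curvature vector $\vec H$ of $M$ satisfies, at each point, $$\|\vec H\|^2=\frac{1}{4\left(1-(\varphi'(u))^2\right)^2}\left(\kappa_\gamma^2+1-2(\varphi'(u))^2-\frac{(\varphi''(u))^2}{1-(\varphi'(u))^2}\right),$$ where $\kappa_\gamma=\|\gamma''(u)\|$ is the curvature of the profile curve $\gamma$.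
   Context: With $E=\langle X_u,X_u\rangle$, $F=\langle X_u,X_v\rangle$, $G=\langle X_v,X_v\rangle$ and $W^2=EG-F^2$, the second fundamental form $h$ is the normal component of the second derivatives: $h(X_u,X_u)=(X_{uu})^\perp$, $h(X_u,X_v)=(X_{uv})^\perp$, $h(X_v,X_v)=(X_{vv})^\perp$ (orthogonal projection onto the normal plane of $M$). The mean curvature vector is $\vec H=\frac{1}{2W^2}\big(E\,h(X_v,X_v)-2F\,h(X_u,X_v)+G\,h(X_u,X_u)\big)$. *)

theory Defs
  imports "HOL-Analysis.Analysis"
begin

definition smooth_on :: "(real \<Rightarrow> real) \<Rightarrow> real set \<Rightarrow> bool" where
  "smooth_on f I \<longleftrightarrow> (\<forall>k. \<forall>t\<in>I. ((deriv ^^ k) f) differentiable (at t))"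

definition open_interval :: "real set \<Rightarrow> bool" where
  "open_interval I \<longleftrightarrow> is_interval I \<and> open I \<and> I \<noteq> {}"

type_synonym surf = "real \<Rightarrow> real \<Rightarrow> real^4"

definition Xu :: "surf \<Rightarrow> surf" where
  "Xu X u v = vector_derivative (\<lambda>s. X s v) (at u)"
definition Xv :: "surf \<Rightarrow> surf" where
  "Xv X u v = vector_derivative (\<lambda>t. X u t) (at v)"

definition coefE :: "surf \<Rightarrow> real \<Rightarrow> real \<Rightarrow> real" where
  "coefE X u v = Xu X u v \<bullet> Xu X u v"
definition coefF :: "surf \<Rightarrow> real \<Rightarrow> real \<Rightarrow> real" where
  "coefF X u v = Xu X u v \<bullet> Xv X u v"
definition coefG :: "surf \<Rightarrow> real \<Rightarrow> real \<Rightarrow> real" where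
  "coefG X u v = Xv X u v \<bullet> Xv X u v"
definition Wsq :: "surf \<Rightarrow> real \<Rightarrow> real \<Rightarrow> real" where
  "Wsq X u v = coefE X u v * coefG X u v - (coefF X u v)^2"

definition normal_part :: "surf \<Rightarrow> real \<Rightarrow> real \<Rightarrow> real^4 \<Rightarrow> real^4" where
  "normal_part X u v w = (THE n. n \<bullet> Xu X u v = 0 \<and> n \<bullet> Xv X u v = 0 \<and>
       w - n \<in> span {Xu X u v, Xv X u v})"

definition h_uu :: "surf \<Rightarrow> real \<Rightarrow> real \<Rightarrow> real^4" where
  "h_uu X u v = normal_part X u v (vector_derivative (\<lambda>s. Xu X s v) (at u))"
definition h_uv :: "surf \<Rightarrow> real \<Rightarrow> real \<Rightarrow> real^4" where
  "h_uv X u v = normal_part X u v (vector_derivative (\<lambda>t. Xu X u t) (at v))"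
definition h_vv :: "surf \<Rightarrow> real \<Rightarrow> real \<Rightarrow> real^4" where
  "h_vv X u v = normal_part X u v (vector_derivative (\<lambda>t. Xv X u t) (at v))"

definition mean_curv :: "surf \<Rightarrow> real \<Rightarrow> real \<Rightarrow> real^4" where
  "mean_curv X u v = (1 / (2 * Wsq X u v)) *\<^sub>R
     (coefE X u v *\<^sub>R h_vv X u v - (2 * coefF X u v) *\<^sub>R h_uv X u v
      + coefG X u v *\<^sub>R h_uu X u v)"

definition curv :: "(real \<Rightarrow> real^4) \<Rightarrow> real \<Rightarrow> real" where
  "curv \<gamma> u = norm (vector_derivative (\<lambda>s. vector_derivative \<gamma> (at s)) (at u))"

end

theory Submission
  imports Defs
begin

lemma vector_4 [simp]:
 "(vector [x,y,z,w] ::('a::zero)^4)$1 = x"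
 "(vector [x,y,z,w] ::('a::zero)^4)$2 = y"
 "(vector [x,y,z,w] ::('a::zero)^4)$3 = z"
 "(vector [x,y,z,w] ::('a::zero)^4)$4 = w"
  unfolding vector_def by simp_all

lemma vec4_decomp: "(vector [a,b,c,d] :: real^4) =
   a *\<^sub>R vector[1,0,0,0] + b *\<^sub>R vector[0,1,0,0] + c *\<^sub>R vector[0,0,1,0] + d *\<^sub>R vector[0,0,0,1]"
  by (simp add: vec_eq_iff forall_4)

lemma vec4_deriv:
  assumes "(f1 has_real_derivative d1) (at s)" "(f2 has_real_derivative d2) (at s)"
    "(f3 has_real_derivative d3) (at s)" "(f4 has_real_derivative d4) (at s)"
  shows "((\<lambda>s. vector [f1 s, f2 s, f3 s, f4 s] :: real^4) has_vector_derivative vector [d1,d2,d3,d4]) (at s)"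
proof -
  have "((\<lambda>s. f1 s *\<^sub>R (vector[1,0,0,0]::real^4) + f2 s *\<^sub>R vector[0,1,0,0] + f3 s *\<^sub>R vector[0,0,1,0] + f4 s *\<^sub>R vector[0,0,0,1])
     has_vector_derivative (d1 *\<^sub>R vector[1,0,0,0] + d2 *\<^sub>R vector[0,1,0,0] + d3 *\<^sub>R vector[0,0,1,0] + d4 *\<^sub>R vector[0,0,0,1])) (at s)"
    by (rule derivative_eq_intros assms has_vector_derivative_const refl | simp)+
  thus ?thesis by (subst (1 2) vec4_decomp) simp
qed

lemma vec4_inner: "(vector [a,b,c,d] :: real^4) \<bullet> vector [e,f,g,h] = a*e+b*f+c*g+d*h"
  by (simp add: inner_vec_def sum_4)

lemma vec4_ops:
  "(vector [a,b,c,d] :: real^4) + vector [e,f,g,h] = vector [a+e,b+f,c+g,d+h]"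
  "(vector [a,b,c,d] :: real^4) - vector [e,f,g,h] = vector [a-e,b-f,c-g,d-h]"
  "r *\<^sub>R (vector [a,b,c,d] :: real^4) = vector [r*a,r*b,r*c,r*d]"
  by (simp_all add: vec_eq_iff forall_4)

lemma fin_alg: fixes w B p q :: real assumes "w \<noteq> 0" "w = 1 - p^2"
  shows "(B - p^2*q^2/w)/(4*w^2) + 1/4 = 1/(4*w^2) * (B + q^2 + p^4 + 1 - 2*p^2 - q^2/w)"
proof -
  have a: "q^2 - q^2/w = -(p^2*q^2/w)"
  proof -
    have "q^2 - q^2/w = q^2*(w - 1)/w" using assms(1) by (simp add: field_simps)
    also have "\<dots> = -(p^2*q^2/w)" by (simp add: assms(2))
    finally show ?thesis .
  qed
  have b: "p^4 + 1 - 2*p^2 = w^2" unfolding assms(2) by algebra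
  have "B + q^2 + p^4 + 1 - 2*p^2 - q^2/w = (B - p^2*q^2/w) + w^2" using a b by linarith
  hence "1/(4*w^2) * (B + q^2 + p^4 + 1 - 2*p^2 - q^2/w) = 1/(4*w^2) * ((B - p^2*q^2/w) + w^2)" by simp
  also have "\<dots> = (B - p^2*q^2/w)/(4*w^2) + 1/4" using assms(1) by (simp add: field_simps)
  finally show ?thesis by simp
qed

lemma vec4_zero: "vector [0,0,0,0] = (0::real^4)"
  by (simp add: vec_eq_iff forall_4)

lemma normal_part_eq:
  assumes "n \<bullet> Xu X u v = 0" "n \<bullet> Xv X u v = 0"
    "w - n = \<alpha> *\<^sub>R Xu X u v + \<beta> *\<^sub>R Xv X u v"
  shows "normal_part X u v w = n"
proof -
  have sp: "w - n \<in> span {Xu X u v, Xv X u v}"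
    unfolding assms(3) by (intro span_add span_mul span_base) auto
  show ?thesis
  unfolding normal_part_def
proof (rule the_equality)
  show "n \<bullet> Xu X u v = 0 \<and> n \<bullet> Xv X u v = 0 \<and> w - n \<in> span {Xu X u v, Xv X u v}"
    using assms sp by auto
next
  fix m assume m: "m \<bullet> Xu X u v = 0 \<and> m \<bullet> Xv X u v = 0 \<and> w - m \<in> span {Xu X u v, Xv X u v}"
  have "m - n = (w - n) - (w - m)" by simp
  also have "\<dots> \<in> span {Xu X u v, Xv X u v}" using sp m by (intro span_diff[of "w - n" _ "w - m"]) auto
  finally have d: "m - n \<in> span {Xu X u v, Xv X u v}" .
  have "orthogonal (m - n) (m - n)"
    by (rule orthogonal_to_span[OF d]) (use m assms in \<open>auto simp: orthogonal_def inner_diff_left\<close>)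
  thus "m = n" by (simp add: orthogonal_def)
qed
qed


theorem proposition2:
  fixes I :: "real set" and x1 x2 \<phi> :: "real \<Rightarrow> real"
  assumes "open_interval I"
    and "smooth_on x1 I" and "smooth_on x2 I" and "smooth_on \<phi> I"
    and "\<forall>u\<in>I. (deriv x1 u)^2 + (deriv x2 u)^2 + (deriv \<phi> u)^2 = 1"
    and "\<forall>u\<in>I. 1 - (deriv \<phi> u)^2 \<noteq> 0"
  shows "\<forall>u\<in>I. \<forall>v.
    (norm (mean_curv (\<lambda>u v. vector [x1 u, x2 u,
              cos (\<phi> u) * cos v - sin (\<phi> u) * sin v,
              cos (\<phi> u) * sin v + sin (\<phi> u) * cos v]) u v))^2
    = 1 / (4 * (1 - (deriv \<phi> u)^2)^2) *
      ((curv (\<lambda>s. vector [x1 s, x2 s, cos (\<phi> s), sin (\<phi> s)]) u)^2 + 1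
       - 2 * (deriv \<phi> u)^2 - (deriv (deriv \<phi>) u)^2 / (1 - (deriv \<phi> u)^2))"
proof (intro ballI allI)
  fix u v assume uI: "u \<in> I"
  have opI: "open I" using assms(1) open_interval_def by blast
  define X where "X = (\<lambda>u v. vector [x1 u, x2 u, cos (\<phi> u + v), sin (\<phi> u + v)] :: real^4)"
  have Xeq: "(\<lambda>u v. vector [x1 u, x2 u,
              cos (\<phi> u) * cos v - sin (\<phi> u) * sin v,
              cos (\<phi> u) * sin v + sin (\<phi> u) * cos v] :: real^4) = X"
    by (auto simp: X_def cos_add sin_add fun_eq_iff algebra_simps)
  have D0: "\<And>f s. smooth_on f I \<Longrightarrow> s \<in> I \<Longrightarrow> (f has_real_derivative deriv f s) (at s)"
  proof -
    fix f s assume "smooth_on f I" "s \<in> I"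
    then have "((deriv ^^ 0) f) differentiable (at s)" unfolding smooth_on_def by blast
    thus "(f has_real_derivative deriv f s) (at s)" by (simp add: DERIV_deriv_iff_real_differentiable)
  qed
  have D1: "\<And>f s. smooth_on f I \<Longrightarrow> s \<in> I \<Longrightarrow> (deriv f has_real_derivative deriv (deriv f) s) (at s)"
  proof -
    fix f s assume "smooth_on f I" "s \<in> I"
    then have "((deriv ^^ 1) f) differentiable (at s)" unfolding smooth_on_def by blast
    thus "(deriv f has_real_derivative deriv (deriv f) s) (at s)" by (simp add: DERIV_deriv_iff_real_differentiable)
  qed
  note d = D0[OF assms(2)] D0[OF assms(3)] D0[OF assms(4)] D1[OF assms(2)] D1[OF assms(3)] D1[OF assms(4)]
  have XU: "\<And>s t. s \<in> I \<Longrightarrow> Xu X s t = vector [deriv x1 s, deriv x2 s,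
      - (sin (\<phi> s + t) * deriv \<phi> s), cos (\<phi> s + t) * deriv \<phi> s]"
    unfolding Xu_def X_def
    by (rule vector_derivative_at, rule vec4_deriv) (auto intro!: derivative_eq_intros d)
  have XV: "\<And>s t. Xv X s t = vector [0, 0, - sin (\<phi> s + t), cos (\<phi> s + t)]"
    unfolding Xv_def X_def
    by (rule vector_derivative_at, rule vec4_deriv) (auto intro!: derivative_eq_intros)
  have WUU: "vector_derivative (\<lambda>s. Xu X s v) (at u) = vector [deriv (deriv x1) u, deriv (deriv x2) u,
      - (cos (\<phi> u + v) * deriv \<phi> u * deriv \<phi> u + sin (\<phi> u + v) * deriv (deriv \<phi>) u),
      - (sin (\<phi> u + v) * deriv \<phi> u * deriv \<phi> u) + cos (\<phi> u + v) * deriv (deriv \<phi>) u]"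
    apply (rule vector_derivative_at)
    apply (rule has_vector_derivative_transform_within_open[OF _ opI uI,
       where f="\<lambda>s. vector [deriv x1 s, deriv x2 s,
      - (sin (\<phi> s + v) * deriv \<phi> s), cos (\<phi> s + v) * deriv \<phi> s]"])
     apply (rule vec4_deriv)
        apply (auto intro!: derivative_eq_intros d uI simp: XU algebra_simps)
    done
  have WUV: "vector_derivative (\<lambda>t. Xu X u t) (at v) = vector [0, 0,
      - (cos (\<phi> u + v) * deriv \<phi> u), - (sin (\<phi> u + v) * deriv \<phi> u)]"
    unfolding XU[OF uI]
    by (rule vector_derivative_at, rule vec4_deriv) (auto intro!: derivative_eq_intros)
  have WVV: "vector_derivative (\<lambda>t. Xv X u t) (at v) = vector [0, 0,
      - cos (\<phi> u + v), - sin (\<phi> u + v)]"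
    unfolding XV
    by (rule vector_derivative_at, rule vec4_deriv) (auto intro!: derivative_eq_intros)
  have G1: "\<And>s. s \<in> I \<Longrightarrow> vector_derivative (\<lambda>s. vector [x1 s, x2 s, cos (\<phi> s), sin (\<phi> s)] :: real^4) (at s)
     = vector [deriv x1 s, deriv x2 s, - (sin (\<phi> s) * deriv \<phi> s), cos (\<phi> s) * deriv \<phi> s]"
    by (rule vector_derivative_at, rule vec4_deriv) (auto intro!: derivative_eq_intros d)
  have G2: "vector_derivative (\<lambda>s. vector_derivative (\<lambda>s. vector [x1 s, x2 s, cos (\<phi> s), sin (\<phi> s)] :: real^4) (at s)) (at u)
     = vector [deriv (deriv x1) u, deriv (deriv x2) u,
      - (cos (\<phi> u) * deriv \<phi> u * deriv \<phi> u + sin (\<phi> u) * deriv (deriv \<phi>) u),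
      - (sin (\<phi> u) * deriv \<phi> u * deriv \<phi> u) + cos (\<phi> u) * deriv (deriv \<phi>) u]"
    apply (rule vector_derivative_at)
    apply (rule has_vector_derivative_transform_within_open[OF _ opI uI,
       where f="\<lambda>s. vector [deriv x1 s, deriv x2 s, - (sin (\<phi> s) * deriv \<phi> s), cos (\<phi> s) * deriv \<phi> s]"])
     apply (rule vec4_deriv)
        apply (auto intro!: derivative_eq_intros d uI simp: G1 algebra_simps)
    done
  have orth: "deriv x1 u * deriv (deriv x1) u + deriv x2 u * deriv (deriv x2) u + deriv \<phi> u * deriv (deriv \<phi>) u = 0"
  proof -
    have A: "((\<lambda>s. (deriv x1 s)^2 + (deriv x2 s)^2 + (deriv \<phi> s)^2) has_real_derivative
       2 * (deriv x1 u * deriv (deriv x1) u + deriv x2 u * deriv (deriv x2) u + deriv \<phi> u * deriv (deriv \<phi>) u)) (at u)"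
      by (auto intro!: derivative_eq_intros d uI simp: algebra_simps)
    have B: "((\<lambda>s. (deriv x1 s)^2 + (deriv x2 s)^2 + (deriv \<phi> s)^2) has_real_derivative 0) (at u)"
      by (rule has_field_derivative_transform_within_open[OF DERIV_const opI uI]) (use assms(5) in auto)
    from DERIV_unique[OF A B] show ?thesis by simp
  qed
  show "(norm (mean_curv (\<lambda>u v. vector [x1 u, x2 u,
              cos (\<phi> u) * cos v - sin (\<phi> u) * sin v,
              cos (\<phi> u) * sin v + sin (\<phi> u) * cos v]) u v))^2
    = 1 / (4 * (1 - (deriv \<phi> u)^2)^2) *
      ((curv (\<lambda>s. vector [x1 s, x2 s, cos (\<phi> s), sin (\<phi> s)]) u)^2 + 1
       - 2 * (deriv \<phi> u)^2 - (deriv (deriv \<phi>) u)^2 / (1 - (deriv \<phi> u)^2))"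
  proof -
  define p where "p = deriv \<phi> u"
  define q where "q = deriv (deriv \<phi>) u"
  define a1 where "a1 = deriv x1 u"
  define a2 where "a2 = deriv x2 u"
  define b1 where "b1 = deriv (deriv x1) u"
  define b2 where "b2 = deriv (deriv x2) u"
  define C where "C = cos (\<phi> u + v)"
  define S where "S = sin (\<phi> u + v)"
  define k where "k = p * q / (1 - p^2)"
  have W: "1 - p^2 \<noteq> 0" using assms(6) uI p_def by auto
  have ar: "a1^2 + a2^2 + p^2 = 1" using assms(5) uI by (simp add: a1_def a2_def p_def)
  have or: "a1*b1 + a2*b2 + p*q = 0" using orth by (simp add: a1_def a2_def p_def b1_def b2_def q_def)
  have CS: "C^2 + S^2 = 1" by (simp add: C_def S_def)
  have kW: "k * (1 - p^2) = p * q" using W by (simp add: k_def)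
  have xu: "Xu X u v = vector [a1, a2, - (S*p), C*p]" by (simp add: XU[OF uI] a1_def a2_def S_def C_def p_def)
  have xv: "Xv X u v = vector [0, 0, - S, C]" by (simp add: XV S_def C_def)
  have hvv: "h_vv X u v = vector [0, 0, - C, - S]"
    unfolding h_vv_def WVV
    by (rule normal_part_eq[where \<alpha>=0 and \<beta>=0]) (auto simp: xu xv vec4_inner vec4_ops vec4_zero C_def S_def algebra_simps)
  have huv: "h_uv X u v = vector [0, 0, - (C*p), - (S*p)]"
    unfolding h_uv_def WUV
    by (rule normal_part_eq[where \<alpha>=0 and \<beta>=0]) (auto simp: xu xv vec4_inner vec4_ops vec4_zero C_def S_def p_def algebra_simps)
  have huu: "h_uu X u v = vector [b1 + k*a1, b2 + k*a2, - (p*p*C), - (p*p*S)]"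
    unfolding h_uu_def WUU
  proof (rule normal_part_eq[where \<alpha>="-k" and \<beta>="k*p+q"])
    show "vector [b1 + k * a1, b2 + k * a2, - (p * p * C), - (p * p * S)] \<bullet> Xu X u v = 0"
      unfolding xu vec4_inner
    proof -
      have "(b1 + k * a1) * a1 + (b2 + k * a2) * a2 = (a1*b1 + a2*b2) + k * (a1^2+a2^2)"
        by (simp add: algebra_simps power2_eq_square)
      also have "\<dots> = (a1*b1 + a2*b2) + k * (1 - p^2)"
      proof -
        have s: "a1^2 + a2^2 = 1 - p^2" using ar by linarith
        show ?thesis by (simp only: s)
      qed
      also have "\<dots> = 0" using or kW by linarith
      finally show "(b1 + k * a1) * a1 + (b2 + k * a2) * a2 + - (p * p * C) * - (S * p) + - (p * p * S) * (C * p) = 0"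
        by (simp add: algebra_simps)
    qed
    show "vector [b1 + k * a1, b2 + k * a2, - (p * p * C), - (p * p * S)] \<bullet> Xv X u v = 0"
      unfolding xv vec4_inner by (simp add: algebra_simps)
    show "vector [deriv (deriv x1) u, deriv (deriv x2) u,
      - (cos (\<phi> u + v) * deriv \<phi> u * deriv \<phi> u + sin (\<phi> u + v) * deriv (deriv \<phi>) u),
      - (sin (\<phi> u + v) * deriv \<phi> u * deriv \<phi> u) + cos (\<phi> u + v) * deriv (deriv \<phi>) u] -
      vector [b1 + k * a1, b2 + k * a2, - (p * p * C), - (p * p * S)] =
      - k *\<^sub>R Xu X u v + (k * p + q) *\<^sub>R Xv X u v"
      unfolding xu xv vec4_ops
      by (simp add: a1_def a2_def b1_def b2_def p_def q_def C_def S_def algebra_simps)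
  qed
  have E: "coefE X u v = 1" unfolding coefE_def xu vec4_inner
  proof -
    have "a1 * a1 + a2 * a2 + - (S * p) * - (S * p) + C * p * (C * p) = (a1^2+a2^2+p^2) + p^2*(C^2+S^2 - 1)"
      by (simp add: algebra_simps power2_eq_square)
    thus "a1 * a1 + a2 * a2 + - (S * p) * - (S * p) + C * p * (C * p) = 1" using ar CS by simp
  qed
  have F: "coefF X u v = p" unfolding coefF_def xu xv vec4_inner
  proof -
    have "a1 * 0 + a2 * 0 + - (S * p) * - S + C * p * C = p * (C^2+S^2)"
      by (simp add: algebra_simps power2_eq_square)
    thus "a1 * 0 + a2 * 0 + - (S * p) * - S + C * p * C = p" using CS by simp
  qed
  have G: "coefG X u v = 1" unfolding coefG_def xv vec4_inner
    using CS by (simp add: algebra_simps power2_eq_square)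
  have e3: "1 / (2 * (1 * 1 - p\<^sup>2)) * (1 * - C - 2 * p * - (C * p) + 1 * - (p * p * C)) = - C / 2"
    using W by (simp add: field_simps power2_eq_square; simp add: algebra_simps)
  have e4: "1 / (2 * (1 * 1 - p\<^sup>2)) * (1 * - S - 2 * p * - (S * p) + 1 * - (p * p * S)) = - S / 2"
    using W by (simp add: field_simps power2_eq_square; simp add: algebra_simps)
  have MC: "mean_curv X u v = vector [(b1 + k*a1) / (2*(1-p^2)), (b2 + k*a2) / (2*(1-p^2)), - C / 2, - S / 2]"
    unfolding mean_curv_def Wsq_def E F G hvv huv huu vec4_ops
    by (simp only: e3 e4) simp
  have curv2: "(norm (vector [deriv (deriv x1) u, deriv (deriv x2) u,
      - (cos (\<phi> u) * deriv \<phi> u * deriv \<phi> u + sin (\<phi> u) * deriv (deriv \<phi>) u),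
      - (sin (\<phi> u) * deriv \<phi> u * deriv \<phi> u) + cos (\<phi> u) * deriv (deriv \<phi>) u] :: real^4))^2
      = b1^2 + b2^2 + q^2 + p^4"
  proof -
    have "(norm (vector [deriv (deriv x1) u, deriv (deriv x2) u,
      - (cos (\<phi> u) * deriv \<phi> u * deriv \<phi> u + sin (\<phi> u) * deriv (deriv \<phi>) u),
      - (sin (\<phi> u) * deriv \<phi> u * deriv \<phi> u) + cos (\<phi> u) * deriv (deriv \<phi>) u] :: real^4))^2
      = b1^2 + b2^2 + q^2 + p^4"
      unfolding power2_norm_eq_inner vec4_inner b1_def b2_def p_def q_def
      using sin_cos_squared_add[of "\<phi> u"] by algebra
    thus ?thesis .
  qed
  have K: "(b1+k*a1)^2 + (b2+k*a2)^2 = b1^2+b2^2 - p^2*q^2/(1-p^2)"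
  proof -
    have "(b1+k*a1)^2 + (b2+k*a2)^2 = b1^2+b2^2 + 2*k*(a1*b1+a2*b2) + k*(k*(a1^2+a2^2))"
      by (simp add: algebra_simps power2_eq_square)
    also have "\<dots> = b1^2+b2^2 + 2*k*(-(p*q)) + k*(k*(1-p^2))"
    proof -
      have s1: "a1^2 + a2^2 = 1 - p^2" using ar by linarith
      have s2: "a1*b1+a2*b2 = -(p*q)" using or by linarith
      show ?thesis by (simp only: s1 s2)
    qed
    also have "\<dots> = b1^2+b2^2 - k*(p*q)" by (simp only: kW; simp add: algebra_simps)
    also have "\<dots> = b1^2+b2^2 - p^2*q^2/(1-p^2)" by (simp add: k_def power2_eq_square)
    finally show ?thesis .
  qed
  have L: "(norm (mean_curv X u v))^2 = ((b1+k*a1)^2 + (b2+k*a2)^2)/(4*(1-p^2)^2) + (C^2+S^2)/4"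
  proof -
    have g: "\<And>A B D. (D::real) \<noteq> 0 \<Longrightarrow> A/(2*D)*(A/(2*D)) + B/(2*D)*(B/(2*D)) = (A^2+B^2)/(4*D^2)"
      by (simp add: field_simps power2_eq_square)
    show ?thesis
      unfolding MC power2_norm_eq_inner vec4_inner
      using g[OF W, of "b1+k*a1" "b2+k*a2"] by (simp add: power2_eq_square)
  qed
  have fin: "(b1^2+b2^2 - p^2*q^2/(1-p^2))/(4*(1-p^2)^2) + 1/4
     = 1/(4*(1-p^2)^2) * (b1^2+b2^2+q^2+p^4 + 1 - 2*p^2 - q^2/(1-p^2))"
    by (rule fin_alg[OF W refl])
  show ?thesis
    unfolding Xeq curv_def G2 curv2 L K CS
    unfolding p_def[symmetric] q_def[symmetric]
    using fin by simp
  qed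
qed

end
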